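(* Let $t$ be a rooted tree with vertex set $I$, and let $\mu(\widehat{0},t)$ be the Möbius number of the interval $[\widehat{0},t]$ in $\Pi_{\operatorname{NAP}}(I)$. If $t$ is a corolla with $n+1$ vertices (a root joined directly to $n$ leaves, $n\geq0$), then $\mu(\widehat{0},t)=(-1)^n$; otherwise $\mu(\widehat{0},t)=0$.
   Context: $\Pi_{\operatorname{NAP}}(I)$ is the set of forests of rooted trees whose vertex set is exactly $I$, partially ordered as follows: $y$ covers $x$ iff $y$ is obtained from $x$ by adding an edge from the root of one component of $x$ to the root of another component (the latter root remaining the root); $\leq$ is the reflexive–transitive closure; $\widehat{0}$ is the forest of one-vertex trees. The Möbius number of an interval $[a,b]$ is $\mu(a,b)$ for the Möbius function of the poset. *)

theory Defs
  imports Main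
begin

text \<open>A forest of rooted trees on a vertex set I is encoded by its set of
  parent edges: (p, c) \<in> E means p is the parent of c.\<close>

definition is_rooted_forest :: "'a set \<Rightarrow> ('a \<times> 'a) set \<Rightarrow> bool" where
  "is_rooted_forest I E \<longleftrightarrow>
     finite I \<and> E \<subseteq> I \<times> I \<and>
     (\<forall>c p q. (p, c) \<in> E \<and> (q, c) \<in> E \<longrightarrow> p = q) \<and>
     acyclic E"

definition is_root :: "'a set \<Rightarrow> ('a \<times> 'a) set \<Rightarrow> 'a \<Rightarrow> bool" where
  "is_root I E v \<longleftrightarrow> v \<in> I \<and> (\<forall>p. (p, v) \<notin> E)"

definition is_rooted_tree :: "'a set \<Rightarrow> ('a \<times> 'a) set \<Rightarrow> bool" where
  "is_rooted_tree I E \<longleftrightarrow> is_rooted_forest I E \<and> (\<exists>!r. is_root I E r)"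

definition nap_cover :: "'a set \<Rightarrow> ('a \<times> 'a) set \<Rightarrow> ('a \<times> 'a) set \<Rightarrow> bool" where
  "nap_cover I x y \<longleftrightarrow> is_rooted_forest I x \<and> is_rooted_forest I y \<and>
     (\<exists>r s. is_root I x r \<and> is_root I x s \<and> r \<noteq> s \<and> y = insert (r, s) x)"

definition nap_le :: "'a set \<Rightarrow> ('a \<times> 'a) set \<Rightarrow> ('a \<times> 'a) set \<Rightarrow> bool" where
  "nap_le I = (nap_cover I)\<^sup>*\<^sup>*"

text \<open>The recursion is implemented with fuel; the fuel
  card [a,b] is always sufficient in a poset with finite intervals.\<close>

fun mobius_aux :: "('b \<Rightarrow> 'b \<Rightarrow> bool) \<Rightarrow> nat \<Rightarrow> 'b \<Rightarrow> 'b \<Rightarrow> int" where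
  "mobius_aux le 0 a b = (if a = b then 1 else 0)"
| "mobius_aux le (Suc n) a b =
     (if a = b then 1
      else if le a b then - (\<Sum>c\<in>{c. le a c \<and> le c b \<and> c \<noteq> b}. mobius_aux le n a c)
      else 0)"

definition mobius :: "('b \<Rightarrow> 'b \<Rightarrow> bool) \<Rightarrow> 'b \<Rightarrow> 'b \<Rightarrow> int" where
  "mobius le a b = mobius_aux le (card {c. le a c \<and> le c b}) a b"

definition is_corolla :: "'a set \<Rightarrow> ('a \<times> 'a) set \<Rightarrow> bool" where
  "is_corolla I E \<longleftrightarrow> (\<exists>r\<in>I. E = {(r, v) | v. v \<in> I \<and> v \<noteq> r})"

end

theory Submission
  imports Defs
begin

lemma alt_sum_pow:
  assumes "finite A" "A \<noteq> {}"
  shows "(\<Sum>X\<in>Pow A. (-1::int) ^ card X) = 0"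
proof -
  have "(\<Prod>x\<in>A. (1::int) - 1) = (\<Sum>X\<in>Pow A. (-1) ^ card X * (\<Prod>x\<in>X. 1) * (\<Prod>x\<in>A-X. 1))"
    by (rule prod_diff_conv_sum[OF assms(1)])
  moreover have "(\<Prod>x\<in>A. (1::int) - 1) = 0" using assms by (simp add: card_gt_0_iff)
  ultimately show ?thesis by simp
qed

lemma aux_eq:
  "mobius_aux le n a a = 1"
  by (cases n) auto

lemma aux_notle: "\<not> le a b \<Longrightarrow> a \<noteq> b \<Longrightarrow> mobius_aux le n a b = 0"
  by (cases n) auto

lemma sub_lemma:
  assumes trans: "\<And>x y z. le x y \<Longrightarrow> le y z \<Longrightarrow> le x z"
    and antis: "\<And>x y. le x y \<Longrightarrow> le y x \<Longrightarrow> x = y"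
    and c: "le c b" "c \<noteq> b"
  shows "{d. le a d \<and> le d c} \<subseteq> {d. le a d \<and> le d b} - {b}"
proof
  fix d assume d: "d \<in> {d. le a d \<and> le d c}"
  then have "le d b" using trans c by blast
  moreover have "d \<noteq> b" using d antis c by blast
  ultimately show "d \<in> {d. le a d \<and> le d b} - {b}" using d by blast
qed

lemma fuel:
  assumes refl: "\<And>x. le x x"
    and trans: "\<And>x y z. le x y \<Longrightarrow> le y z \<Longrightarrow> le x z"
    and antis: "\<And>x y. le x y \<Longrightarrow> le y x \<Longrightarrow> x = y"
    and fin: "finite {d. le a d \<and> le d b0}"
  shows "\<forall>b m. le b b0 \<longrightarrow> card {d. le a d \<and> le d b} \<le> n \<longrightarrow> card {d. le a d \<and> le d b} \<le> m
           \<longrightarrow> mobius_aux le n a b = mobius_aux le m a b"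
proof (induction n)
  case 0
  show ?case
  proof (intro allI impI)
    fix b m assume b: "le b b0" and c0: "card {d. le a d \<and> le d b} \<le> 0"
      and "card {d. le a d \<and> le d b} \<le> m"
    have fb: "finite {d. le a d \<and> le d b}"
      by (rule finite_subset[OF _ fin]) (use trans b in blast)
    show "mobius_aux le 0 a b = mobius_aux le m a b"
    proof (cases "le a b")
      case True
      then have "a \<in> {d. le a d \<and> le d b}" using refl by simp
      then have "{d. le a d \<and> le d b} \<noteq> {}" by blast
      then have "card {d. le a d \<and> le d b} \<noteq> 0" using fb by simp
      then have False using c0 by simp
      then show ?thesis ..
    next
      case False
      moreover have "a \<noteq> b" using False refl by metis
      ultimately show ?thesis by (simp add: aux_notle)
    qed
  qed
next
  case (Suc n)
  show ?case
  proof (intro allI impI)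
    fix b m assume b: "le b b0" and cn: "card {d. le a d \<and> le d b} \<le> Suc n"
      and cm: "card {d. le a d \<and> le d b} \<le> m"
    have fb: "finite {d. le a d \<and> le d b}"
      by (rule finite_subset[OF _ fin]) (use trans b in blast)
    show "mobius_aux le (Suc n) a b = mobius_aux le m a b"
    proof (cases "a = b")
      case True then show ?thesis by (simp only: aux_eq)
    next
      case ab: False
      show ?thesis
      proof (cases "le a b")
        case False then show ?thesis using ab by (simp add: aux_notle)
      next
        case True
      then have abs: "{a, b} \<subseteq> {d. le a d \<and> le d b}" using refl by simp
      have "card {a, b} \<le> card {d. le a d \<and> le d b}" by (rule card_mono[OF fb abs])
      then have "2 \<le> m" using ab cm by simp
      then obtain m' where m': "m = Suc m'" by (cases m) auto
      have eqs: "mobius_aux le n a c = mobius_aux le m' a c"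
        if c: "c \<in> {c. le a c \<and> le c b \<and> c \<noteq> b}" for c
      proof -
        have sub: "{d. le a d \<and> le d c} \<subseteq> {d. le a d \<and> le d b} - {b}"
          by (rule sub_lemma[OF trans antis]) (use c in simp_all)
        have "card {d. le a d \<and> le d c} \<le> card ({d. le a d \<and> le d b} - {b})"
          by (rule card_mono[OF _ sub]) (use fb in simp)
        also have "\<dots> = card {d. le a d \<and> le d b} - 1"
          using True fb refl by (simp add: card_Diff_singleton)
        finally have cc: "card {d. le a d \<and> le d c} \<le> card {d. le a d \<and> le d b} - 1" .
        have c0: "le c b0" using c trans b by blast
        have c1: "card {d. le a d \<and> le d c} \<le> n" using cc cn by linarith
        have c2: "card {d. le a d \<and> le d c} \<le> m'" using cc cm m' by linarith
        show ?thesis using Suc.IH c0 c1 c2 by blast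
      qed
      have "mobius_aux le (Suc n) a b = - (\<Sum>c\<in>{c. le a c \<and> le c b \<and> c \<noteq> b}. mobius_aux le n a c)"
        by (subst mobius_aux.simps(2)) (simp only: if_not_P[OF ab] if_P[OF True])
      also have "\<dots> = - (\<Sum>c\<in>{c. le a c \<and> le c b \<and> c \<noteq> b}. mobius_aux le m' a c)"
        by (rule arg_cong[where f=uminus], rule sum.cong[OF HOL.refl eqs], assumption)
      also have "\<dots> = mobius_aux le m a b" unfolding m'
        by (subst mobius_aux.simps(2)) (simp only: if_not_P[OF ab] if_P[OF True])
      finally show ?thesis .
      qed
    qed
  qed
qed
lemma mobius_rec:
  assumes refl: "\<And>x. le x x"
    and trans: "\<And>x y z. le x y \<Longrightarrow> le y z \<Longrightarrow> le x z"
    and antis: "\<And>x y. le x y \<Longrightarrow> le y x \<Longrightarrow> x = y"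
    and fin: "finite {d. le a d \<and> le d b}"
    and ab: "le a b" "a \<noteq> b"
  shows "mobius le a b = - (\<Sum>c\<in>{c. le a c \<and> le c b \<and> c \<noteq> b}. mobius le a c)"
proof -
  have abs: "{a, b} \<subseteq> {d. le a d \<and> le d b}" using refl ab by simp
  have "card {a, b} \<le> card {d. le a d \<and> le d b}" by (rule card_mono[OF fin abs])
  then have "2 \<le> card {d. le a d \<and> le d b}" using ab by simp
  then obtain k where k: "card {d. le a d \<and> le d b} = Suc k"
    by (cases "card {d. le a d \<and> le d b}") auto
  have F: "\<forall>b' m. le b' b \<longrightarrow> card {d. le a d \<and> le d b'} \<le> k \<longrightarrow> card {d. le a d \<and> le d b'} \<le> m
           \<longrightarrow> mobius_aux le k a b' = mobius_aux le m a b'"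
    by (rule fuel[OF refl trans antis fin])
  have eqs: "mobius_aux le k a c = mobius le a c"
    if c: "c \<in> {c. le a c \<and> le c b \<and> c \<noteq> b}" for c
  proof -
    have sub: "{d. le a d \<and> le d c} \<subseteq> {d. le a d \<and> le d b} - {b}"
      by (rule sub_lemma[OF trans antis]) (use c in simp_all)
    have "card {d. le a d \<and> le d c} \<le> card ({d. le a d \<and> le d b} - {b})"
      by (rule card_mono[OF _ sub]) (use fin in simp)
    also have "\<dots> = k"
      using ab fin refl k by (simp add: card_Diff_singleton)
    finally have ck: "card {d. le a d \<and> le d c} \<le> k" .
    have cb: "le c b" using c by simp
    have "mobius_aux le k a c = mobius_aux le (card {d. le a d \<and> le d c}) a c"
      using F cb ck by blast
    then show ?thesis unfolding mobius_def .
  qed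
  have "mobius le a b = mobius_aux le (Suc k) a b" unfolding mobius_def k ..
  also have "\<dots> = - (\<Sum>c\<in>{c. le a c \<and> le c b \<and> c \<noteq> b}. mobius_aux le k a c)"
    by (subst mobius_aux.simps(2)) (simp only: if_not_P[OF ab(2)] if_P[OF ab(1)])
  also have "\<dots> = - (\<Sum>c\<in>{c. le a c \<and> le c b \<and> c \<noteq> b}. mobius le a c)"
    by (rule arg_cong[where f=uminus], rule sum.cong[OF HOL.refl eqs], assumption)
  finally show ?thesis .
qed

definition closedin :: "('a \<times> 'a) set \<Rightarrow> ('a \<times> 'a) set \<Rightarrow> bool" where
  "closedin y x \<longleftrightarrow> x \<subseteq> y \<and> (\<forall>p r s. (p, r) \<in> x \<longrightarrow> (r, s) \<in> y \<longrightarrow> (r, s) \<in> x)"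

lemma forest_subset:
  assumes "is_rooted_forest I y" "x \<subseteq> y"
  shows "is_rooted_forest I x"
  using assms acyclic_subset unfolding is_rooted_forest_def by blast

lemma nap_le_closed:
  assumes "nap_le I x y"
  shows "closedin y x"
  using assms unfolding nap_le_def
proof (induction rule: rtranclp_induct)
  case base
  then show ?case unfolding closedin_def by blast
next
  case (step y z)
  from step.hyps(2) obtain r s where r: "is_root I y r" and z: "z = insert (r, s) y"
    unfolding nap_cover_def by blast
  show ?case unfolding closedin_def
  proof (intro conjI allI impI)
    show "x \<subseteq> z" using step.IH z unfolding closedin_def by blast
  next
    fix p r' s' assume a: "(p, r') \<in> x" "(r', s') \<in> z"
    show "(r', s') \<in> x"
    proof (cases "(r', s') \<in> y")
      case True then show ?thesis using step.IH a unfolding closedin_def by blast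
    next
      case False
      then have "r' = r" using a z by auto
      then have "(p, r) \<in> y" using a step.IH unfolding closedin_def by blast
      then show ?thesis using r unfolding is_root_def by blast
    qed
  qed
qed

lemma closed_nap_le:
  assumes y: "is_rooted_forest I y"
  shows "closedin y x \<Longrightarrow> nap_le I x y"
proof (induction "card (y - x)" arbitrary: x rule: less_induct)
  case less
  have fy: "finite y" using y unfolding is_rooted_forest_def
    by (meson finite_SigmaI finite_subset)
  have xy: "x \<subseteq> y" and cl: "\<And>p r s. (p, r) \<in> x \<Longrightarrow> (r, s) \<in> y \<Longrightarrow> (r, s) \<in> x"
    using less.prems unfolding closedin_def by blast+
  show ?case
  proof (cases "x = y")
    case True then show ?thesis unfolding nap_le_def by simp
  next
    case False
    have acy: "acyclic y" using y unfolding is_rooted_forest_def by blast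
    have wf: "wf (y\<inverse>)" by (rule finite_acyclic_wf_converse[OF fy acy])
    have "snd ` (y - x) \<noteq> {}" using False xy by blast
    then obtain s0 where "s0 \<in> snd ` (y - x)" by blast
    then obtain s where sQ: "s \<in> snd ` (y - x)" and smin: "\<And>s'. (s', s) \<in> y\<inverse> \<Longrightarrow> s' \<notin> snd ` (y - x)"
      using wf unfolding wf_eq_minimal by metis
    from sQ obtain r where rs: "(r, s) \<in> y" "(r, s) \<notin> x" by force
    have child: "(s, s') \<in> x" if "(s, s') \<in> y" for s'
    proof (rule ccontr)
      assume "(s, s') \<notin> x"
      then have "s' \<in> snd ` (y - x)" using that by force
      then show False using smin that by blast
    qed
    define x' where "x' = insert (r, s) x"
    have x'y: "x' \<subseteq> y" using xy rs unfolding x'_def by blast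
    have yI: "y \<subseteq> I \<times> I" and up: "\<And>c p q. (p, c) \<in> y \<Longrightarrow> (q, c) \<in> y \<Longrightarrow> p = q"
      using y unfolding is_rooted_forest_def by blast+
    have rroot: "is_root I x r" unfolding is_root_def
    proof
      show "r \<in> I" using yI rs by blast
      show "\<forall>p. (p, r) \<notin> x" using cl rs by blast
    qed
    have sroot: "is_root I x s" unfolding is_root_def
    proof
      show "s \<in> I" using yI rs by blast
      show "\<forall>p. (p, s) \<notin> x" using up rs xy by blast
    qed
    have rns: "r \<noteq> s" using acy rs unfolding acyclic_def by blast
    have cov: "nap_cover I x x'" unfolding nap_cover_def
      using forest_subset[OF y xy] forest_subset[OF y x'y] rroot sroot rns x'_def by blast
    have cl': "closedin y x'" unfolding closedin_def
    proof (intro conjI allI impI)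
      show "x' \<subseteq> y" by (rule x'y)
    next
      fix p r' s' assume a: "(p, r') \<in> x'" "(r', s') \<in> y"
      show "(r', s') \<in> x'"
      proof (cases "(p, r') \<in> x")
        case True then show ?thesis using cl a unfolding x'_def by blast
      next
        case False then have "r' = s" using a unfolding x'_def by blast
        then show ?thesis using child a unfolding x'_def by blast
      qed
    qed
    have "card (y - x') < card (y - x)"
      unfolding x'_def using rs fy by (metis Diff_insert card_Diff1_less finite_Diff DiffI)
    then have "nap_le I x' y" using less.hyps cl' by blast
    then show ?thesis using cov unfolding nap_le_def
      by (meson converse_rtranclp_into_rtranclp)
  qed
qed

lemma interval_char:
  assumes S: "is_rooted_forest I S"
  shows "{c. nap_le I {} c \<and> nap_le I c S} = {c. closedin S c}"
proof (intro set_eqI iffI)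
  fix c assume "c \<in> {c. nap_le I {} c \<and> nap_le I c S}"
  then show "c \<in> {c. closedin S c}" using nap_le_closed by blast
next
  fix c assume "c \<in> {c. closedin S c}"
  then have c: "closedin S c" by simp
  then have "c \<subseteq> S" unfolding closedin_def by blast
  then have fc: "is_rooted_forest I c" by (rule forest_subset[OF S])
  have "closedin c {}" unfolding closedin_def by blast
  then have "nap_le I {} c" by (rule closed_nap_le[OF fc])
  moreover have "nap_le I c S" by (rule closed_nap_le[OF S c])
  ultimately show "c \<in> {c. nap_le I {} c \<and> nap_le I c S}" by simp
qed

lemma main_lemma:
  assumes t: "is_rooted_forest I t"
  defines "L \<equiv> {(r, s). (r, s) \<in> t \<and> (\<forall>s'. (s, s') \<notin> t)}"
  shows "closedin t S \<Longrightarrow> mobius (nap_le I) {} S = (if S \<subseteq> L then (-1) ^ card S else 0)"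
proof (induction "card S" arbitrary: S rule: less_induct)
  case less
  define f :: "('a \<times> 'a) set \<Rightarrow> int" where "f S = (if S \<subseteq> L then (-1) ^ card S else 0)" for S
  have ft: "finite t" using t unfolding is_rooted_forest_def
    by (meson finite_SigmaI finite_subset)
  have acy: "acyclic t" using t unfolding is_rooted_forest_def by blast
  have St: "S \<subseteq> t" and clS: "\<And>p r s. (p, r) \<in> S \<Longrightarrow> (r, s) \<in> t \<Longrightarrow> (r, s) \<in> S"
    using less.prems unfolding closedin_def by blast+
  have fS: "finite S" using St ft finite_subset by blast
  have SF: "is_rooted_forest I S" using forest_subset[OF t St] .
  have refl: "\<And>x. nap_le I x x" unfolding nap_le_def by simp
  have trans: "\<And>x y z. nap_le I x y \<Longrightarrow> nap_le I y z \<Longrightarrow> nap_le I x z"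
    unfolding nap_le_def by (meson rtranclp_trans)
  have antis: "\<And>x y. nap_le I x y \<Longrightarrow> nap_le I y x \<Longrightarrow> x = y"
    using nap_le_closed unfolding closedin_def by blast
  have int: "{c. nap_le I {} c \<and> nap_le I c S} = {c. closedin S c}"
    by (rule interval_char[OF SF])
  have finJ: "finite {c. closedin S c}"
    by (rule finite_subset[of _ "Pow S"]) (use fS in \<open>auto simp: closedin_def\<close>)
  show ?case
  proof (cases "S = {}")
    case True
    then show ?thesis unfolding mobius_def by (simp add: aux_eq)
  next
    case False
    have le0: "nap_le I {} S" by (rule closed_nap_le[OF SF]) (auto simp: closedin_def)
    have rec: "mobius (nap_le I) {} S = - (\<Sum>c\<in>{c. nap_le I {} c \<and> nap_le I c S \<and> c \<noteq> S}. mobius (nap_le I) {} c)"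
      by (rule mobius_rec[OF refl trans antis]) (use int finJ le0 False in auto)
    have set_eq: "{c. nap_le I {} c \<and> nap_le I c S \<and> c \<noteq> S} = {c. closedin S c} - {S}"
      using int by blast
    have IHs: "mobius (nap_le I) {} c = f c" if c: "c \<in> {c. closedin S c} - {S}" for c
    proof -
      have cS: "c \<subset> S" using c unfolding closedin_def by blast
      have "card c < card S" using psubset_card_mono[OF fS cS] .
      moreover have "closedin t c" using c St clS unfolding closedin_def by blast
      ultimately show ?thesis using less.hyps unfolding f_def by blast
    qed
    have SinJ: "S \<in> {c. closedin S c}" unfolding closedin_def by blast
    have sumJ: "(\<Sum>c\<in>{c. closedin S c}. f c) = (\<Sum>c\<in>Pow (S \<inter> L). f c)"
    proof (rule sum.mono_neutral_right[OF finJ])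
      show "Pow (S \<inter> L) \<subseteq> {c. closedin S c}" using St unfolding closedin_def L_def by fast
      show "\<forall>i\<in>{c. closedin S c} - Pow (S \<inter> L). f i = 0"
        unfolding f_def closedin_def by auto
    qed
    also have "\<dots> = (\<Sum>c\<in>Pow (S \<inter> L). (-1) ^ card c)"
      by (rule sum.cong) (auto simp: f_def)
    also have "\<dots> = 0"
    proof (rule alt_sum_pow)
      show "finite (S \<inter> L)" using fS by simp
      have wf: "wf (t\<inverse>)" by (rule finite_acyclic_wf_converse[OF ft acy])
      obtain s0 where "s0 \<in> snd ` S" using False by blast
      then obtain s where sQ: "s \<in> snd ` S" and smin: "\<And>s'. (s', s) \<in> t\<inverse> \<Longrightarrow> s' \<notin> snd ` S"
        using wf unfolding wf_eq_minimal by metis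
      from sQ obtain r where rs: "(r, s) \<in> S" by force
      have "\<forall>s'. (s, s') \<notin> t"
      proof (intro allI notI)
        fix s' assume "(s, s') \<in> t"
        then have "(s, s') \<in> S" using clS rs by blast
        then have "s' \<in> snd ` S" by force
        then show False using smin \<open>(s, s') \<in> t\<close> by blast
      qed
      then have "(r, s) \<in> S \<inter> L" using rs St unfolding L_def by blast
      then show "S \<inter> L \<noteq> {}" by blast
    qed
    finally have z: "(\<Sum>c\<in>{c. closedin S c}. f c) = 0" .
    have "(\<Sum>c\<in>{c. closedin S c}. f c) = f S + (\<Sum>c\<in>{c. closedin S c} - {S}. f c)"
      using sum.remove[OF finJ SinJ] .
    then have "f S = - (\<Sum>c\<in>{c. closedin S c} - {S}. f c)" using z by simp
    also have "\<dots> = - (\<Sum>c\<in>{c. closedin S c} - {S}. mobius (nap_le I) {} c)"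
      using IHs by simp
    also have "\<dots> = mobius (nap_le I) {} S" using rec set_eq by simp
    finally show ?thesis unfolding f_def by simp
  qed
qed

theorem proposition6p13:
  fixes I :: "'a set" and t :: "('a \<times> 'a) set"
  assumes "finite I" and "is_rooted_tree I t"
  shows "mobius (nap_le I) {} t =
           (if is_corolla I t then (-1) ^ (card I - 1) else 0)"
proof -
  have tf: "is_rooted_forest I t" using assms(2) unfolding is_rooted_tree_def by blast
  obtain r where r: "is_root I t r" and runiq: "\<And>v. is_root I t v \<Longrightarrow> v = r"
    using assms(2) unfolding is_rooted_tree_def by blast
  have tI: "t \<subseteq> I \<times> I" using tf unfolding is_rooted_forest_def by blast
  define L where "L = {(r, s). (r, s) \<in> t \<and> (\<forall>s'. (s, s') \<notin> t)}"
  have clt: "closedin t t" unfolding closedin_def by blast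
  have M: "mobius (nap_le I) {} t = (if t \<subseteq> L then (-1) ^ card t else 0)"
    using main_lemma[OF tf clt] unfolding L_def .
  have eq: "t \<subseteq> L \<longleftrightarrow> is_corolla I t"
  proof
    assume tL: "t \<subseteq> L"
    have par: "p = r" if "(p, v) \<in> t" for p v
    proof (rule ccontr)
      assume "p \<noteq> r"
      moreover have "p \<in> I" using that tI by blast
      ultimately obtain q where "(q, p) \<in> t" using runiq unfolding is_root_def by blast
      then show False using tL that unfolding L_def by blast
    qed
    have "t = {(r, v) | v. v \<in> I \<and> v \<noteq> r}"
    proof (intro set_eqI iffI)
      fix e assume e: "e \<in> t"
      obtain p v where pv: "e = (p, v)" by force
      have "p = r" using par e pv by blast
      moreover have "v \<noteq> r" using r e pv calculation unfolding is_root_def by blast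
      moreover have "v \<in> I" using e pv tI by blast
      ultimately show "e \<in> {(r, v) | v. v \<in> I \<and> v \<noteq> r}" using pv by blast
    next
      fix e assume "e \<in> {(r, v) | v. v \<in> I \<and> v \<noteq> r}"
      then obtain v where v: "e = (r, v)" "v \<in> I" "v \<noteq> r" by blast
      then obtain p where "(p, v) \<in> t" using runiq unfolding is_root_def by blast
      then show "e \<in> t" using par v by blast
    qed
    then show "is_corolla I t" unfolding is_corolla_def using r unfolding is_root_def by blast
  next
    assume "is_corolla I t"
    then obtain r0 where "r0 \<in> I" and t0: "t = {(r0, v) | v. v \<in> I \<and> v \<noteq> r0}"
      unfolding is_corolla_def by blast
    then show "t \<subseteq> L" unfolding L_def by blast
  qed
  have card: "card t = card I - 1" if co: "is_corolla I t"
  proof -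
    obtain r0 where r0: "r0 \<in> I" and t0: "t = {(r0, v) | v. v \<in> I \<and> v \<noteq> r0}"
      using co unfolding is_corolla_def by blast
    have "t = (\<lambda>v. (r0, v)) ` (I - {r0})" using t0 by blast
    then have "card t = card (I - {r0})" by (simp add: card_image inj_on_def)
    then show ?thesis using r0 assms(1) by simp
  qed
  show ?thesis using M eq card by simp
qed

end
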